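(* Let $P$ be an interrupt-driven program as described in the context. Let $l$ be a load of a global variable $v$ in handler $T_i$, and let $s$ be a store to $v$ in handler $T_j$ with $i \neq j$. Suppose at least one of the following holds: (1) $l$ is a covered load and $s$ is an intercepted store; (2) $l$ is a covered load and $p_j \le p_i$; (3) $s$ is an intercepted store and $p_i \le p_j$. Then in no execution of $P$ under the interrupt semantics does an executed instance of $l$ read from an executed instance of $s$. That is, $\mathrm{MustNotReadFrom}(l,s)$ is sound.
   Context: An interrupt-driven program $P$ consists of finitely many interrupt handlers $T_1,\dots,T_n$. Each handler $T_i$ is a sequential program given by a control-flow graph $\langle N_i, n^i_0, \delta_i\rangle$ with entry node $n^i_0$ and an exit node. Handlers access local variables and shared global variables. Each handler $T_i$ has an integer priority $p_i$, and each statement belongs to exactly one handler. An invocation of $T_i$ executes statements one at a time along a path of its control-flow graph from $n^i_0$, and it completes on reaching the exit node. Interrupt semantics: an execution is a finite sequence of steps, each executing one statement of some invocation. Invocations of any handler may be started any number of times. At every moment, the started-but-not-completed invocations form a stack whose handler priorities are strictly increasing from bottom to top. Only the top invocation may take a step. A new invocation of $T_j$ may be started only if the stack is empty or $p_j$ is strictly greater than the priority of the top invocation's handler. An invocation is popped when it completes. Thus a handler can only be preempted by a handler of strictly higher priority, and invocations nest. Reads-from: in an execution, an executed instance of a load of $v$ reads from an executed instance of a store to $v$ if that store instance is the last store to $v$ executed before the load instance. Dominance and post-dominance are taken within a single handler's control-flow graph. A statement $a$ dominates $b$ if every path from the entry node to $b$ passes through $a$. A statement $a \neq b$ post-dominates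 $b$ if every path from $b$ to the exit node passes through $a$ after $b$. A load $l$ of $v$ in $T_i$ is a covered load if some store to $v$ in $T_i$ dominates $l$. A store $s$ to $v$ in $T_j$ is an intercepted store if some other store $s_2 \neq s$ to $v$ in $T_j$ post-dominates $s$. *)

theory Defs
  imports Main
begin

text \<open>Kinds of statements with respect to global variables 'v.  Statements that only
touch local variables (or do not access memory) are of kind Other.\<close>
datatype 'v skind = Load 'v | Store 'v | Other

text \<open>A program: handlers of type 'h, statements (= CFG nodes) of type 's, global
variables of type 'v.\<close>
record ('h, 's, 'v) program =
  prio :: "'h \<Rightarrow> int"
  owner :: "'s \<Rightarrow> 'h"
  entry_node :: "'h \<Rightarrow> 's"
  exit_node :: "'h \<Rightarrow> 's"
  succ :: "'s \<Rightarrow> 's set"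
  skind :: "'s \<Rightarrow> 'v skind"

definition wf_program :: "('h, 's, 'v) program \<Rightarrow> bool" where
  "wf_program P \<longleftrightarrow>
     finite (UNIV :: 'h set) \<and> finite (UNIV :: 's set) \<and>
     (\<forall>h. owner P (entry_node P h) = h \<and> owner P (exit_node P h) = h) \<and>
     (\<forall>a b. b \<in> succ P a \<longrightarrow> owner P b = owner P a)"

fun cfg_path :: "('h, 's, 'v) program \<Rightarrow> 's list \<Rightarrow> bool" where
  "cfg_path P [] = False"
| "cfg_path P [x] = True"
| "cfg_path P (x # y # xs) = (y \<in> succ P x \<and> cfg_path P (y # xs))"

definition dominates :: "('h, 's, 'v) program \<Rightarrow> 's \<Rightarrow> 's \<Rightarrow> bool" where
  "dominates P a b \<longleftrightarrow> owner P a = owner P b \<and>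
     (\<forall>xs. cfg_path P xs \<and> hd xs = entry_node P (owner P b) \<and> last xs = b \<longrightarrow> a \<in> set xs)"

definition post_dominates :: "('h, 's, 'v) program \<Rightarrow> 's \<Rightarrow> 's \<Rightarrow> bool" where
  "post_dominates P a b \<longleftrightarrow> a \<noteq> b \<and> owner P a = owner P b \<and>
     (\<forall>xs. cfg_path P xs \<and> hd xs = b \<and> last xs = exit_node P (owner P b) \<longrightarrow> a \<in> set (tl xs))"

definition covered_load :: "('h, 's, 'v) program \<Rightarrow> 's \<Rightarrow> bool" where
  "covered_load P l \<longleftrightarrow> (\<exists>v s'. skind P l = Load v \<and> skind P s' = Store v \<and>
     owner P s' = owner P l \<and> dominates P s' l)"

definition intercepted_store :: "('h, 's, 'v) program \<Rightarrow> 's \<Rightarrow> bool" where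
  "intercepted_store P s \<longleftrightarrow> (\<exists>v s2. skind P s = Store v \<and> skind P s2 = Store v \<and>
     s2 \<noteq> s \<and> owner P s2 = owner P s \<and> post_dominates P s2 s)"

text \<open>A configuration is the stack of started-but-not-completed invocations, top first.
A frame (h, n) is an invocation of handler h whose next statement to execute is n.
Starting an invocation is not a step (produces no statement); executing a statement is.\<close>
inductive istep :: "('h, 's, 'v) program \<Rightarrow> ('h \<times> 's) list \<Rightarrow> 's option \<Rightarrow> ('h \<times> 's) list \<Rightarrow> bool"
  for P where
  start: "stk = [] \<or> prio P (fst (hd stk)) < prio P h
          \<Longrightarrow> istep P stk None ((h, entry_node P h) # stk)"
| exec_exit: "n = exit_node P h \<Longrightarrow> istep P ((h, n) # stk) (Some n) stk"
| exec_next: "n \<noteq> exit_node P h \<Longrightarrow> n' \<in> succ P n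
              \<Longrightarrow> istep P ((h, n) # stk) (Some n) ((h, n') # stk)"

inductive execution :: "('h, 's, 'v) program \<Rightarrow> ('h \<times> 's) list \<Rightarrow> 's list \<Rightarrow> bool"
  for P where
  init: "execution P [] []"
| step: "execution P stk tr \<Longrightarrow> istep P stk e stk' \<Longrightarrow>
         execution P stk' (tr @ (case e of None \<Rightarrow> [] | Some n \<Rightarrow> [n]))"

definition reads_from :: "('h, 's, 'v) program \<Rightarrow> 's list \<Rightarrow> nat \<Rightarrow> nat \<Rightarrow> bool" where
  "reads_from P tr k m \<longleftrightarrow> m < k \<and> k < length tr \<and>
     (\<exists>v. skind P (tr ! k) = Load v \<and> skind P (tr ! m) = Store v \<and>
          (\<forall>m'. m < m' \<and> m' < k \<longrightarrow> skind P (tr ! m') \<noteq> Store v))"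

end

theory Submission
  imports Defs
begin

definition domn :: "('h, 's, 'v) program \<Rightarrow> 'h \<Rightarrow> 's \<Rightarrow> 's \<Rightarrow> bool" where
  "domn P h n x \<longleftrightarrow> (\<forall>xs. cfg_path P xs \<and> hd xs = entry_node P h \<and> last xs = n \<longrightarrow> x \<in> set xs)"

definition reach :: "('h, 's, 'v) program \<Rightarrow> 's \<Rightarrow> 's \<Rightarrow> bool" where
  "reach P n z \<longleftrightarrow> (\<forall>xs. cfg_path P xs \<and> hd xs = n \<and> last xs = exit_node P (owner P n) \<longrightarrow> z \<in> set xs)"

definition W :: "('h, 's, 'v) program \<Rightarrow> ('h \<times> 's) list \<Rightarrow> bool" where
  "W P stk \<longleftrightarrow> (\<forall>h n. (h,n) \<in> set stk \<longrightarrow> owner P n = h) \<and>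
     sorted_wrt (\<lambda>a b. prio P (fst b) < prio P (fst a)) stk"

definition SA :: "('h, 's, 'v) program \<Rightarrow> ('h \<times> 's) list \<Rightarrow> 's list \<Rightarrow> bool" where
  "SA P stk tr \<longleftrightarrow> (\<forall>h n x. (h,n) \<in> set stk \<longrightarrow> x \<noteq> n \<longrightarrow> domn P h n x \<longrightarrow>
     (\<exists>q<length tr. tr!q = x \<and> (\<forall>r. q<r \<and> r<length tr \<longrightarrow>
        prio P h < prio P (owner P (tr!r)) \<or> owner P (tr!r) = h)))"

definition SB :: "('h, 's, 'v) program \<Rightarrow> ('h \<times> 's) list \<Rightarrow> 's list \<Rightarrow> bool" where
  "SB P stk tr \<longleftrightarrow> (\<forall>m z. m < length tr \<longrightarrow> post_dominates P z (tr!m) \<longrightarrow>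
     (\<forall>q. m<q \<and> q<length tr \<longrightarrow> tr!q \<noteq> z) \<longrightarrow>
     (\<exists>n. (owner P (tr!m), n) \<in> set stk \<and> reach P n z))"

definition TA :: "('h, 's, 'v) program \<Rightarrow> 's list \<Rightarrow> bool" where
  "TA P tr \<longleftrightarrow> (\<forall>k x. k<length tr \<longrightarrow> x \<noteq> tr!k \<longrightarrow> domn P (owner P (tr!k)) (tr!k) x \<longrightarrow>
     (\<exists>q<k. tr!q = x \<and> (\<forall>r. q<r \<and> r<k \<longrightarrow>
        prio P (owner P (tr!k)) < prio P (owner P (tr!r)) \<or> owner P (tr!r) = owner P (tr!k))))"

definition TB :: "('h, 's, 'v) program \<Rightarrow> 's list \<Rightarrow> bool" where
  "TB P tr \<longleftrightarrow> (\<forall>m k z. m<k \<longrightarrow> k<length tr \<longrightarrow> prio P (owner P (tr!k)) \<le> prio P (owner P (tr!m)) \<longrightarrow>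
     owner P (tr!k) \<noteq> owner P (tr!m) \<longrightarrow> post_dominates P z (tr!m) \<longrightarrow>
     (\<exists>q. m<q \<and> q<k \<and> tr!q = z))"

definition Inv where "Inv P stk tr \<longleftrightarrow> W P stk \<and> SA P stk tr \<and> SB P stk tr \<and> TA P tr \<and> TB P tr"

lemma cfg_path_snoc: "cfg_path P xs \<Longrightarrow> y \<in> succ P (last xs) \<Longrightarrow> cfg_path P (xs@[y])"
  by (induction P xs rule: cfg_path.induct) auto

lemma cfg_path_hd_nonempty: "cfg_path P xs \<Longrightarrow> xs \<noteq> []"
  by (cases xs) auto

lemma cfg_path_cons: "cfg_path P xs \<Longrightarrow> hd xs \<in> succ P n \<Longrightarrow> cfg_path P (n # xs)"
  by (cases xs) auto

lemma nth_snoc: "(tr @ [n]) ! i = (if i < length tr then tr ! i else n)" if "i \<le> length tr"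
  using that by (auto simp: nth_append)

lemma TA_step:
  assumes W: "W P ((h,n)#rest)" and SA: "SA P ((h,n)#rest) tr" and TA: "TA P tr"
  shows "TA P (tr @ [n])"
  unfolding TA_def
proof (intro allI impI)
  fix k x assume k: "k < length (tr@[n])" and x: "x \<noteq> (tr@[n])!k"
    and d: "domn P (owner P ((tr@[n])!k)) ((tr@[n])!k) x"
  show "\<exists>q<k. (tr@[n])!q = x \<and> (\<forall>r. q<r \<and> r<k \<longrightarrow>
        prio P (owner P ((tr@[n])!k)) < prio P (owner P ((tr@[n])!r)) \<or> owner P ((tr@[n])!r) = owner P ((tr@[n])!k))"
  proof (cases "k < length tr")
    case True
    have tk: "(tr@[n])!k = tr!k" using True by (simp add: nth_append)
    from TA True x d tk obtain q where "q<k" "tr!q = x" "\<forall>r. q<r \<and> r<k \<longrightarrow>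
        prio P (owner P (tr!k)) < prio P (owner P (tr!r)) \<or> owner P (tr!r) = owner P (tr!k)"
      unfolding TA_def by (metis (no_types, lifting))
    then show ?thesis using True by (intro exI[of _ q]) (auto simp: nth_append)
  next
    case False
    then have kk: "k = length tr" using k by simp
    have on: "owner P n = h" using W unfolding W_def by auto
    have tk: "(tr@[n])!k = n" using kk by simp
    have "(h,n) \<in> set ((h,n)#rest)" by simp
    with SA x d tk on obtain q where "q<length tr" "tr!q = x" "\<forall>r. q<r \<and> r<length tr \<longrightarrow>
        prio P h < prio P (owner P (tr!r)) \<or> owner P (tr!r) = h"
      unfolding SA_def by (metis (no_types, lifting))
    then show ?thesis using kk on by (intro exI[of _ q]) (auto simp: nth_append)
  qed
qed

lemma W_top_lt: "W P ((h,n)#rest) \<Longrightarrow> (h0,n0) \<in> set rest \<Longrightarrow> prio P h0 < prio P h"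
  unfolding W_def by auto

lemma TB_step:
  assumes W: "W P ((h,n)#rest)" and SB: "SB P ((h,n)#rest) tr" and TB: "TB P tr"
  shows "TB P (tr @ [n])"
  unfolding TB_def
proof (intro allI impI)
  fix m k z assume mk: "m < k" and k: "k < length (tr@[n])"
    and p: "prio P (owner P ((tr@[n])!k)) \<le> prio P (owner P ((tr@[n])!m))"
    and o: "owner P ((tr@[n])!k) \<noteq> owner P ((tr@[n])!m)"
    and pd: "post_dominates P z ((tr@[n])!m)"
  show "\<exists>q. m<q \<and> q<k \<and> (tr@[n])!q = z"
  proof (cases "k < length tr")
    case True
    have tk: "(tr@[n])!k = tr!k" "(tr@[n])!m = tr!m" using True mk by (simp_all add: nth_append)
    from TB True mk p o pd tk obtain q where "m<q" "q<k" "tr!q = z"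
      unfolding TB_def by (metis (no_types, lifting))
    then show ?thesis using True by (intro exI[of _ q]) (auto simp: nth_append)
  next
    case False
    then have kk: "k = length tr" using k by simp
    have on: "owner P n = h" using W unfolding W_def by auto
    show ?thesis
    proof (rule ccontr)
      assume nz: "\<not> ?thesis"
      have tm: "(tr@[n])!m = tr!m" using mk kk by (simp add: nth_append)
      have "\<forall>q. m<q \<and> q<length tr \<longrightarrow> tr!q \<noteq> z" using nz kk by (auto simp: nth_append)
      with SB mk kk pd tm obtain n0 where fr: "(owner P (tr!m), n0) \<in> set ((h,n)#rest)"
        unfolding SB_def by fastforce
      have pk: "prio P h \<le> prio P (owner P (tr!m))" using p kk on tm by simp
      have ok: "h \<noteq> owner P (tr!m)" using o kk on tm by simp
      from fr ok have "(owner P (tr!m), n0) \<in> set rest" by auto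
      then have "prio P (owner P (tr!m)) < prio P h" using W_top_lt[OF W] by blast
      with pk show False by simp
    qed
  qed
qed

lemma ext_q: "q < length tr \<Longrightarrow> \<forall>r. q<r \<and> r<length tr \<longrightarrow> Q (tr!r) \<Longrightarrow> Q n \<Longrightarrow>
   \<forall>r. q<r \<and> r<length (tr@[n]) \<longrightarrow> Q ((tr@[n])!r)"
  by (auto simp: nth_append less_Suc_eq)

lemma SA_lower:
  assumes W: "W P ((h,n)#rest)" and SA: "SA P ((h,n)#rest) tr"
    and h0: "(h0,n0) \<in> set rest" and x: "x \<noteq> n0" and d: "domn P h0 n0 x"
  shows "\<exists>q<length (tr@[n]). (tr@[n])!q = x \<and> (\<forall>r. q<r \<and> r<length (tr@[n]) \<longrightarrow>
        prio P h0 < prio P (owner P ((tr@[n])!r)) \<or> owner P ((tr@[n])!r) = h0)"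
proof -
  have h0': "(h0,n0) \<in> set ((h,n)#rest)" using h0 by simp
  have "\<exists>q<length tr. tr!q = x \<and> (\<forall>r. q<r \<and> r<length tr \<longrightarrow>
        prio P h0 < prio P (owner P (tr!r)) \<or> owner P (tr!r) = h0)"
    using SA h0' x d unfolding SA_def by blast
  then obtain q where q: "q<length tr" "tr!q = x" "\<forall>r. q<r \<and> r<length tr \<longrightarrow>
        prio P h0 < prio P (owner P (tr!r)) \<or> owner P (tr!r) = h0" by blast
  have on: "owner P n = h" using W unfolding W_def by auto
  have lt: "prio P h0 < prio P h" using W_top_lt[OF W h0] .
  have "\<forall>r. q<r \<and> r<length (tr@[n]) \<longrightarrow>
        prio P h0 < prio P (owner P ((tr@[n])!r)) \<or> owner P ((tr@[n])!r) = h0"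
  proof (intro allI impI)
    fix r assume r: "q<r \<and> r<length (tr@[n])"
    show "prio P h0 < prio P (owner P ((tr@[n])!r)) \<or> owner P ((tr@[n])!r) = h0"
    proof (cases "r < length tr")
      case True then show ?thesis using q(3) r by (simp add: nth_append)
    next
      case False then have "(tr@[n])!r = n" using r by (simp add: nth_append)
      then show ?thesis using on lt by simp
    qed
  qed
  then show ?thesis using q by (intro exI[of _ q]) (simp add: nth_append)
qed

lemma step_exit:
  assumes wf: "wf_program P" and I: "Inv P ((h,n)#rest) tr" and ex: "n = exit_node P h"
  shows "Inv P rest (tr @ [n])"
proof -
  from I have W: "W P ((h,n)#rest)" and SA: "SA P ((h,n)#rest) tr" and SB: "SB P ((h,n)#rest) tr"
    and TA: "TA P tr" and TB: "TB P tr" unfolding Inv_def by auto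
  have on: "owner P n = h" using W unfolding W_def by auto
  have W': "W P rest" using W unfolding W_def by auto
  have SA': "SA P rest (tr@[n])" unfolding SA_def using SA_lower[OF W SA] by blast
  have SB': "SB P rest (tr@[n])" unfolding SB_def
  proof (intro allI impI)
    fix m z assume m: "m < length (tr@[n])" and pd: "post_dominates P z ((tr@[n])!m)"
      and nz: "\<forall>q. m<q \<and> q<length (tr@[n]) \<longrightarrow> (tr@[n])!q \<noteq> z"
    show "\<exists>n0. (owner P ((tr@[n])!m), n0) \<in> set rest \<and> reach P n0 z"
    proof (cases "m < length tr")
      case True
      have tm: "(tr@[n])!m = tr!m" using True by (simp add: nth_append)
      have "\<forall>q. m<q \<and> q<length tr \<longrightarrow> tr!q \<noteq> z" using nz by (auto simp: nth_append)
      with SB True pd tm obtain n0 where fr: "(owner P (tr!m), n0) \<in> set ((h,n)#rest)" and r: "reach P n0 z"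
        unfolding SB_def by fastforce
      have nzn: "n \<noteq> z" using nz True by (auto simp: nth_append)
      have "(owner P (tr!m), n0) \<noteq> (h,n)"
      proof
        assume eq: "(owner P (tr!m), n0) = (h,n)"
        have "cfg_path P [n] \<and> hd [n] = n \<and> last [n] = exit_node P (owner P n)" using ex on by simp
        with r eq have "z \<in> set [n]" unfolding reach_def by blast
        with nzn show False by simp
      qed
      with fr r tm show ?thesis by auto
    next
      case False
      then have "(tr@[n])!m = n" using m by (simp add: nth_append)
      with pd have "post_dominates P z n" by simp
      moreover have "cfg_path P [n] \<and> hd [n] = n \<and> last [n] = exit_node P (owner P n)" using ex on by simp
      ultimately have False unfolding post_dominates_def by fastforce
      then show ?thesis ..
    qed
  qed
  show ?thesis unfolding Inv_def using W' SA' SB' TA_step[OF W SA TA] TB_step[OF W SB TB] by blast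
qed

lemma step_next:
  assumes wf: "wf_program P" and I: "Inv P ((h,n)#rest) tr" and ex: "n \<noteq> exit_node P h"
    and sc: "n' \<in> succ P n"
  shows "Inv P ((h,n')#rest) (tr @ [n])"
proof -
  from I have W: "W P ((h,n)#rest)" and SA: "SA P ((h,n)#rest) tr" and SB: "SB P ((h,n)#rest) tr"
    and TA: "TA P tr" and TB: "TB P tr" unfolding Inv_def by auto
  have on: "owner P n = h" using W unfolding W_def by auto
  have on': "owner P n' = h" using wf sc on unfolding wf_program_def by auto
  have W': "W P ((h,n')#rest)" using W on' unfolding W_def by auto
  have SA': "SA P ((h,n')#rest) (tr@[n])" unfolding SA_def
  proof (intro allI impI)
    fix h0 n0 x assume fr: "(h0,n0) \<in> set ((h,n')#rest)" and x: "x \<noteq> n0" and d: "domn P h0 n0 x"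
    show "\<exists>q<length (tr@[n]). (tr@[n])!q = x \<and> (\<forall>r. q<r \<and> r<length (tr@[n]) \<longrightarrow>
        prio P h0 < prio P (owner P ((tr@[n])!r)) \<or> owner P ((tr@[n])!r) = h0)"
    proof (cases "(h0,n0) \<in> set rest")
      case True then show ?thesis using SA_lower[OF W SA True x d] by blast
    next
      case False
      with fr have eq: "h0 = h" "n0 = n'" by auto
      show ?thesis
      proof (cases "x = n")
        case True then show ?thesis using eq by (intro exI[of _ "length tr"]) auto
      next
        case False
        have "domn P h n x" unfolding domn_def
        proof (intro allI impI)
          fix xs assume a: "cfg_path P xs \<and> hd xs = entry_node P h \<and> last xs = n"
          then have ne: "xs \<noteq> []" using cfg_path_hd_nonempty by blast
          have "cfg_path P (xs@[n'])" using a sc cfg_path_snoc by metis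
          moreover have "hd (xs@[n']) = entry_node P h" "last (xs@[n']) = n'" using a ne by auto
          ultimately have "x \<in> set (xs@[n'])" using d eq unfolding domn_def by blast
          then show "x \<in> set xs" using x eq by auto
        qed
        have hn: "(h,n) \<in> set ((h,n)#rest)" by simp
        have "\<exists>q<length tr. tr!q = x \<and> (\<forall>r. q<r \<and> r<length tr \<longrightarrow>
            prio P h < prio P (owner P (tr!r)) \<or> owner P (tr!r) = h)"
          using SA hn False \<open>domn P h n x\<close> unfolding SA_def by blast
        then obtain q where q: "q<length tr" "tr!q = x" "\<forall>r. q<r \<and> r<length tr \<longrightarrow>
            prio P h < prio P (owner P (tr!r)) \<or> owner P (tr!r) = h" by blast
        have "\<forall>r. q<r \<and> r<length (tr@[n]) \<longrightarrow>
            prio P h0 < prio P (owner P ((tr@[n])!r)) \<or> owner P ((tr@[n])!r) = h0"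
          using ext_q[OF q(1) q(3), of n] on eq by simp
        then show ?thesis using q by (intro exI[of _ q]) (simp add: nth_append)
      qed
    qed
  qed
  have SB': "SB P ((h,n')#rest) (tr@[n])" unfolding SB_def
  proof (intro allI impI)
    fix m z assume m: "m < length (tr@[n])" and pd: "post_dominates P z ((tr@[n])!m)"
      and nz: "\<forall>q. m<q \<and> q<length (tr@[n]) \<longrightarrow> (tr@[n])!q \<noteq> z"
    have rn': "reach P n' z" if rn: "reach P n z" and nzn: "n \<noteq> z"
      unfolding reach_def
    proof (intro allI impI)
      fix xs assume a: "cfg_path P xs \<and> hd xs = n' \<and> last xs = exit_node P (owner P n')"
      then have ne: "xs \<noteq> []" using cfg_path_hd_nonempty by blast
      have "cfg_path P (n#xs)" using a sc cfg_path_cons by metis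
      moreover have "hd (n#xs) = n" "last (n#xs) = exit_node P (owner P n)" using a ne on on' by auto
      ultimately have "z \<in> set (n#xs)" using rn unfolding reach_def by blast
      then show "z \<in> set xs" using nzn by auto
    qed
    show "\<exists>n0. (owner P ((tr@[n])!m), n0) \<in> set ((h,n')#rest) \<and> reach P n0 z"
    proof (cases "m < length tr")
      case True
      have tm: "(tr@[n])!m = tr!m" using True by (simp add: nth_append)
      have "\<forall>q. m<q \<and> q<length tr \<longrightarrow> tr!q \<noteq> z" using nz by (auto simp: nth_append)
      with SB True pd tm obtain n0 where fr: "(owner P (tr!m), n0) \<in> set ((h,n)#rest)" and r: "reach P n0 z"
        unfolding SB_def by fastforce
      have nzn: "n \<noteq> z" using nz True by (auto simp: nth_append)
      show ?thesis
      proof (cases "(owner P (tr!m), n0) \<in> set rest")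
        case True with r tm show ?thesis by auto
      next
        case False
        with fr have "owner P (tr!m) = h" "n0 = n" by auto
        with rn'[OF _ nzn] r tm show ?thesis by auto
      qed
    next
      case False
      then have tm: "(tr@[n])!m = n" using m by (simp add: nth_append)
      with pd have pdn: "post_dominates P z n" by simp
      have "reach P n' z" unfolding reach_def
      proof (intro allI impI)
        fix xs assume a: "cfg_path P xs \<and> hd xs = n' \<and> last xs = exit_node P (owner P n')"
        then have ne: "xs \<noteq> []" using cfg_path_hd_nonempty by blast
        have "cfg_path P (n#xs)" using a sc cfg_path_cons by metis
        moreover have "hd (n#xs) = n" "last (n#xs) = exit_node P (owner P n)" using a ne on on' by auto
        ultimately have "z \<in> set (tl (n#xs))" using pdn unfolding post_dominates_def by blast
        then show "z \<in> set xs" by simp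
      qed
      with tm on show ?thesis by auto
    qed
  qed
  show ?thesis unfolding Inv_def using W' SA' SB' TA_step[OF W SA TA] TB_step[OF W SB TB] by blast
qed

lemma step_start:
  assumes wf: "wf_program P" and I: "Inv P stk tr"
    and c: "stk = [] \<or> prio P (fst (hd stk)) < prio P h"
  shows "Inv P ((h, entry_node P h) # stk) tr"
proof -
  from I have W: "W P stk" and SA: "SA P stk tr" and SB: "SB P stk tr"
    and TA: "TA P tr" and TB: "TB P tr" unfolding Inv_def by auto
  have oe: "owner P (entry_node P h) = h" using wf unfolding wf_program_def by auto
  have lt: "\<forall>b\<in>set stk. prio P (fst b) < prio P h"
  proof (cases stk)
    case Nil then show ?thesis by simp
  next
    case (Cons a as)
    with W c have "\<forall>b\<in>set as. prio P (fst b) < prio P (fst a)" "prio P (fst a) < prio P h"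
      unfolding W_def by auto
    with Cons show ?thesis by auto
  qed
  have W': "W P ((h, entry_node P h) # stk)" using W oe lt unfolding W_def by auto
  have SA': "SA P ((h, entry_node P h) # stk) tr" unfolding SA_def
  proof (intro allI impI)
    fix h0 n0 x assume fr: "(h0,n0) \<in> set ((h, entry_node P h) # stk)" and x: "x \<noteq> n0" and d: "domn P h0 n0 x"
    show "\<exists>q<length tr. tr!q = x \<and> (\<forall>r. q<r \<and> r<length tr \<longrightarrow>
        prio P h0 < prio P (owner P (tr!r)) \<or> owner P (tr!r) = h0)"
    proof (cases "(h0,n0) \<in> set stk")
      case True then show ?thesis using SA x d unfolding SA_def by blast
    next
      case False
      with fr have eq: "h0 = h" "n0 = entry_node P h" by auto
      have "cfg_path P [entry_node P h] \<and> hd [entry_node P h] = entry_node P h \<and> last [entry_node P h] = entry_node P h" by simp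
      with d eq have "x \<in> set [entry_node P h]" unfolding domn_def by blast
      with x eq show ?thesis by simp
    qed
  qed
  have SB': "SB P ((h, entry_node P h) # stk) tr" using SB unfolding SB_def by fastforce
  show ?thesis unfolding Inv_def using W' SA' SB' TA TB by blast
qed

lemma exec_inv:
  assumes wf: "wf_program P"
  shows "execution P stk tr \<Longrightarrow> Inv P stk tr"
proof (induction rule: execution.induct)
  case init
  then show ?case unfolding Inv_def W_def SA_def SB_def TA_def TB_def by simp
next
  case (step stk tr e stk')
  from step.hyps(2) show ?case
  proof cases
    case (start h)
    then show ?thesis using step_start[OF wf step.IH] by simp
  next
    case exec_exit
    then show ?thesis using step_exit[OF wf] step.IH by fastforce
  next
    case exec_next
    then show ?thesis using step_next[OF wf] step.IH by fastforce
  qed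
qed

theorem theorem2:
  fixes P :: "('h, 's, 'v) program" and l s :: 's and v :: 'v
  assumes "wf_program P"
    and "skind P l = Load v"
    and "skind P s = Store v"
    and "owner P l \<noteq> owner P s"
    and "(covered_load P l \<and> intercepted_store P s)
         \<or> (covered_load P l \<and> prio P (owner P s) \<le> prio P (owner P l))
         \<or> (intercepted_store P s \<and> prio P (owner P l) \<le> prio P (owner P s))"
  shows "\<not> (\<exists>stk tr k m. execution P stk tr \<and> reads_from P tr k m \<and> tr ! k = l \<and> tr ! m = s)"
proof
  assume "\<exists>stk tr k m. execution P stk tr \<and> reads_from P tr k m \<and> tr ! k = l \<and> tr ! m = s"
  then obtain stk tr k m where ex: "execution P stk tr" and rf: "reads_from P tr k m"
    and tk: "tr ! k = l" and tm: "tr ! m = s" by blast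
  have I: "Inv P stk tr" using exec_inv[OF assms(1) ex] .
  then have TA: "TA P tr" and TB: "TB P tr" unfolding Inv_def by auto
  from rf assms(2,3) tk tm have mk: "m < k" "k < length tr"
    and nost: "\<forall>m'. m < m' \<and> m' < k \<longrightarrow> skind P (tr ! m') \<noteq> Store v"
    unfolding reads_from_def by auto
  have caseA: False if cl: "covered_load P l" and p: "prio P (owner P s) \<le> prio P (owner P l)"
  proof -
    from cl assms(2) obtain s' where s': "skind P s' = Store v" "owner P s' = owner P l" "dominates P s' l"
      unfolding covered_load_def by auto
    have "s' \<noteq> l" using s' assms(2) by auto
    moreover have "domn P (owner P l) l s'" using s'(3) unfolding dominates_def domn_def by blast
    ultimately obtain q where q: "q < k" "tr!q = s'" "\<forall>r. q<r \<and> r<k \<longrightarrow>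
        prio P (owner P l) < prio P (owner P (tr!r)) \<or> owner P (tr!r) = owner P l"
      using TA mk tk unfolding TA_def by metis
    consider "m < q" | "m = q" | "q < m" by arith
    then show False
    proof cases
      case 1 then show ?thesis using nost q s' by auto
    next
      case 2 then show ?thesis using q tm s' assms(4) by auto
    next
      case 3 then show ?thesis using q(3)[rule_format, of m] mk tm p assms(4) by auto
    qed
  qed
  have caseB: False if ic: "intercepted_store P s" and p: "prio P (owner P l) \<le> prio P (owner P s)"
  proof -
    from ic assms(3) obtain s2 where s2: "skind P s2 = Store v" "post_dominates P s2 s"
      unfolding intercepted_store_def by auto
    from TB mk tk tm p assms(4) s2(2) obtain q where "m<q" "q<k" "tr!q = s2"
      unfolding TB_def by metis
    with nost s2 show False by auto
  qed
  show False
  proof (cases "prio P (owner P s) \<le> prio P (owner P l)")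
    case True
    then show ?thesis using assms(5) caseA caseB by auto
  next
    case False
    then show ?thesis using assms(5) caseA caseB by auto
  qed
qed

end
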